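(* Let $M,K\ge 1$, $\mathcal K=\{1,\dots,K\}$, channels $\mathbf h_1,\dots,\mathbf h_K\in\mathbb C^{M}$, power budget $P>0$, weights $\mathbf u=(u_1,\dots,u_K)\in\mathbb R_{\ge 0}^K\setminus\{\mathbf 0\}$, $\mu\ge 0$, $P_c>0$ and rate thresholds $R_k^{th}\ge 0$ be given. For precoders $\mathbf p_c,\mathbf p_1,\dots,\mathbf p_K\in\mathbb C^M$ define $$\gamma_{c,k}=\frac{|\mathbf h_k^H\mathbf p_c|^2}{\sum_{j\in\mathcal K}|\mathbf h_k^H\mathbf p_j|^2+1},\qquad \gamma_{p,k}=\frac{|\mathbf h_k^H\mathbf p_k|^2}{\sum_{j\in\mathcal K\setminus\{k\}}|\mathbf h_k^H\mathbf p_j|^2+1},$$ and let $\Phi(\mathbf p,\mathbf c,\boldsymbol\gamma_p)=\dfrac{\sum_{k\in\mathcal K}u_k\big(C_k+\log(1+\gamma_{p,k})\big)}{\mu\big(\|\mathbf p_c\|^2+\sum_{k}\|\mathbf p_k\|^2\big)+P_c}$. Problem (A): maximize $\Phi$ over $\mathbf p_c,\mathbf p_1,\dots,\mathbf p_K$, $\mathbf c=(C_1,\dots,C_K)\in\mathbb R^K$, $\boldsymbol\gamma_c,\boldsymbol\gamma_p$ subject to: $\gamma_{c,k},\gamma_{p,k}$ given by the SINR formulas above; $\sum_{k'\in\mathcal K}C_{k'}\le\log(1+\gamma_{c,k})$ for all $k$; $C_k\ge\max\{0,R_k^{th}-\log(1+\gamma_{p,k})\}$ for all $k$; $\|\mathbf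 p_c\|^2+\sum_k\|\mathbf p_k\|^2\le P$. Problem (B): maximize $\Phi$ over $\mathbf p_c,\mathbf p_1,\dots,\mathbf p_K$, $\mathbf c\in\mathbb R^K$, $\boldsymbol\gamma_p\in\mathbb R_{\ge0}^K$, $s\ge 0$, $d_k\in\mathbb R$ and $e_k\in\mathbb C$ ($k=2,\dots,K$), subject to: (i) $\sqrt{\gamma_{p,k}}\big(\sum_{j\ne k}|\mathbf h_k^H\mathbf p_j|^2+1\big)^{1/2}\le \mathbf h_k^H\mathbf p_k$ for all $k$; (ii) $\sqrt{s}\big(\sum_{j\in\mathcal K}|\mathbf h_1^H\mathbf p_j|^2+1\big)^{1/2}\le\mathbf h_1^H\mathbf p_c$; (iii) $\sqrt{s}\big(\sum_{j\in\mathcal K}|\mathbf h_k^H\mathbf p_j|^2+1\big)^{1/2}\le d_k$ for all $k>1$; (iv) $d_k\le|e_k|$ for all $k>1$; (v) $\operatorname{Re}\{\mathbf h_k^H\mathbf p_k\}\ge 0$, $\operatorname{Im}\{\mathbf h_k^H\mathbf p_k\}=0$ for all $k$; (vi) $\operatorname{Re}\{\mathbf h_1^H\mathbf p_c\}\ge0$, $\operatorname{Im}\{\mathbf h_1^H\mathbf p_c\}=0$; (vii) $d_k\ge 0$ and $e_k=\mathbf h_k^H\mathbf p_c$ for all $k>1$; (viii) $\sum_{k}C_k\le\log(1+s)$; (ix) $C_k\ge\max\{0,R_k^{th}-\log(1+\gamma_{p,k})\}$ for all $k$, and $\|\mathbf p_c\|^2+\sum_k\|\mathbf p_k\|^2\le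 P$. (In (B), $\gamma_{p,k}$ is a free variable, not defined by the SINR formula.) Then problems (A) and (B) have the same optimal value, and for every optimal solution $(\mathbf p_c,\mathbf p_1,\dots,\mathbf p_K,\mathbf c,\boldsymbol\gamma_p,s,\mathbf d,\mathbf e)$ of (B), the precoders $(\mathbf p_c,\mathbf p_1,\dots,\mathbf p_K)$ together with $\mathbf c$ and the SINRs $\gamma_{c,k},\gamma_{p,k}$ computed from these precoders by the formulas above form an optimal solution of (A).
   Context: Rate-splitting downlink model: a base station with $M$ antennas serves $K$ single-antenna users with channels $\mathbf h_k$; $\mathbf p_c$ is the common-message precoder and $\mathbf p_k$ the private precoder of user $k$; $C_k$ is the portion of the common rate allocated to user $k$. Logarithms are base 2. Inequalities involving complex quantities such as $\mathbf h_k^H\mathbf p_k$ are meaningful because the constraints force these quantities to be real. *)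

theory Defs
  imports "HOL-Analysis.Analysis"
begin

text \<open>Users are indexed by {1..K} (naturals); vectors in C^M are complex ^ 'm.
  Values of index-functions outside {1..K} are irrelevant.\<close>

definition herm :: "complex ^ 'm \<Rightarrow> complex ^ 'm \<Rightarrow> complex" where
  "herm h q = (\<Sum>i\<in>UNIV. cnj (h $ i) * q $ i)"

definition gamma_c :: "nat \<Rightarrow> (nat \<Rightarrow> complex ^ 'm) \<Rightarrow> complex ^ 'm \<Rightarrow> (nat \<Rightarrow> complex ^ 'm) \<Rightarrow> nat \<Rightarrow> real" where
  "gamma_c K h pc p k =
     (cmod (herm (h k) pc))\<^sup>2 / ((\<Sum>j\<in>{1..K}. (cmod (herm (h k) (p j)))\<^sup>2) + 1)"

definition gamma_p :: "nat \<Rightarrow> (nat \<Rightarrow> complex ^ 'm) \<Rightarrow> (nat \<Rightarrow> complex ^ 'm) \<Rightarrow> nat \<Rightarrow> real" where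
  "gamma_p K h p k =
     (cmod (herm (h k) (p k)))\<^sup>2 / ((\<Sum>j\<in>{1..K}-{k}. (cmod (herm (h k) (p j)))\<^sup>2) + 1)"

definition totpow :: "nat \<Rightarrow> complex ^ 'm \<Rightarrow> (nat \<Rightarrow> complex ^ 'm) \<Rightarrow> real" where
  "totpow K pc p = (norm pc)\<^sup>2 + (\<Sum>k\<in>{1..K}. (norm (p k))\<^sup>2)"

definition Phi :: "nat \<Rightarrow> (nat \<Rightarrow> real) \<Rightarrow> real \<Rightarrow> real \<Rightarrow> complex ^ 'm \<Rightarrow> (nat \<Rightarrow> complex ^ 'm)
                    \<Rightarrow> (nat \<Rightarrow> real) \<Rightarrow> (nat \<Rightarrow> real) \<Rightarrow> real" where
  "Phi K u mu Pc pc p c gp =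
     (\<Sum>k\<in>{1..K}. u k * (c k + log 2 (1 + gp k))) / (mu * totpow K pc p + Pc)"

definition feasA :: "nat \<Rightarrow> (nat \<Rightarrow> complex ^ 'm) \<Rightarrow> real \<Rightarrow> (nat \<Rightarrow> real)
     \<Rightarrow> complex ^ 'm \<Rightarrow> (nat \<Rightarrow> complex ^ 'm) \<Rightarrow> (nat \<Rightarrow> real) \<Rightarrow> (nat \<Rightarrow> real) \<Rightarrow> (nat \<Rightarrow> real) \<Rightarrow> bool" where
  "feasA K h P Rth pc p c gc gp \<longleftrightarrow>
     (\<forall>k\<in>{1..K}. gc k = gamma_c K h pc p k) \<and>
     (\<forall>k\<in>{1..K}. gp k = gamma_p K h p k) \<and>
     (\<forall>k\<in>{1..K}. (\<Sum>k'\<in>{1..K}. c k') \<le> log 2 (1 + gc k)) \<and>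
     (\<forall>k\<in>{1..K}. c k \<ge> max 0 (Rth k - log 2 (1 + gp k))) \<and>
     totpow K pc p \<le> P"

text \<open>Feasible set of problem (B). Complex-valued inequalities are read on real parts,
  the imaginary parts being forced to 0 by (v),(vi).\<close>
definition feasB :: "nat \<Rightarrow> (nat \<Rightarrow> complex ^ 'm) \<Rightarrow> real \<Rightarrow> (nat \<Rightarrow> real)
     \<Rightarrow> complex ^ 'm \<Rightarrow> (nat \<Rightarrow> complex ^ 'm) \<Rightarrow> (nat \<Rightarrow> real) \<Rightarrow> (nat \<Rightarrow> real) \<Rightarrow> real
     \<Rightarrow> (nat \<Rightarrow> real) \<Rightarrow> (nat \<Rightarrow> complex) \<Rightarrow> bool" where
  "feasB K h P Rth pc p c gp s d e \<longleftrightarrow>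
     (\<forall>k\<in>{1..K}. gp k \<ge> 0) \<and> s \<ge> 0 \<and>
     (\<forall>k\<in>{1..K}. sqrt (gp k) * sqrt ((\<Sum>j\<in>{1..K}-{k}. (cmod (herm (h k) (p j)))\<^sup>2) + 1)
                    \<le> Re (herm (h k) (p k))) \<and>
     sqrt s * sqrt ((\<Sum>j\<in>{1..K}. (cmod (herm (h 1) (p j)))\<^sup>2) + 1) \<le> Re (herm (h 1) pc) \<and>
     (\<forall>k\<in>{2..K}. sqrt s * sqrt ((\<Sum>j\<in>{1..K}. (cmod (herm (h k) (p j)))\<^sup>2) + 1) \<le> d k) \<and>
     (\<forall>k\<in>{2..K}. d k \<le> cmod (e k)) \<and>
     (\<forall>k\<in>{1..K}. Re (herm (h k) (p k)) \<ge> 0 \<and> Im (herm (h k) (p k)) = 0) \<and>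
     Re (herm (h 1) pc) \<ge> 0 \<and> Im (herm (h 1) pc) = 0 \<and>
     (\<forall>k\<in>{2..K}. d k \<ge> 0 \<and> e k = herm (h k) pc) \<and>
     (\<Sum>k\<in>{1..K}. c k) \<le> log 2 (1 + s) \<and>
     (\<forall>k\<in>{1..K}. c k \<ge> max 0 (Rth k - log 2 (1 + gp k))) \<and>
     totpow K pc p \<le> P"

definition valA where
  "valA K h P u mu Pc Rth =
     Sup {ereal (Phi K u mu Pc pc p c gp) | pc p c gc gp. feasA K h P Rth pc p c gc gp}"

definition valB where
  "valB K h P u mu Pc Rth =
     Sup {ereal (Phi K u mu Pc pc p c gp) | pc p c gp s d e. feasB K h P Rth pc p c gp s d e}"

definition optA where
  "optA K h P u mu Pc Rth pc p c gc gp \<longleftrightarrow> feasA K h P Rth pc p c gc gp \<and>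
     (\<forall>pc' p' c' gc' gp'. feasA K h P Rth pc' p' c' gc' gp' \<longrightarrow>
        Phi K u mu Pc pc' p' c' gp' \<le> Phi K u mu Pc pc p c gp)"

definition optB where
  "optB K h P u mu Pc Rth pc p c gp s d e \<longleftrightarrow> feasB K h P Rth pc p c gp s d e \<and>
     (\<forall>pc' p' c' gp' s' d' e'. feasB K h P Rth pc' p' c' gp' s' d' e' \<longrightarrow>
        Phi K u mu Pc pc' p' c' gp' \<le> Phi K u mu Pc pc p c gp)"

end

theory Submission
  imports Defs
begin

lemma sq_le:
  fixes x D y :: real
  assumes "x \<ge> 0" "D > 0" "sqrt x * sqrt D \<le> y"
  shows "x \<le> y^2 / D"
proof -
  have "sqrt (x * D) \<le> y" using assms by (simp add: real_sqrt_mult)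
  hence "x * D \<le> y^2" using assms
    by (metis mult_nonneg_nonneg less_imp_le real_sqrt_le_iff real_sqrt_pow2 real_sqrt_ge_zero order_trans power_mono)
  thus ?thesis using assms by (simp add: field_simps)
qed

lemma sq_eq:
  fixes a D :: real
  assumes "a \<ge> 0" "D > 0"
  shows "sqrt (a^2 / D) * sqrt D = a"
proof -
  have 1: "sqrt (a^2 / D) * sqrt D = sqrt (a^2 / D * D)" by (metis real_sqrt_mult)
  have "a^2 / D * D = a^2" using assms by simp
  hence "sqrt (a^2 / D * D) = a" using assms by simp
  with 1 show ?thesis by simp
qed

lemma cmod_real_Re: "Im z = 0 \<Longrightarrow> Re z \<ge> 0 \<Longrightarrow> cmod z = Re z"
  by (simp add: cmod_def)

lemma herm_scale: "herm g (\<chi> i. w * x$i) = w * herm g x"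
  by (simp add: herm_def sum_distrib_left algebra_simps)

lemma norm_scale: "cmod w = 1 \<Longrightarrow> norm (\<chi> i. w * x$i :: complex^'m) = norm x"
  by (simp add: norm_vec_def norm_mult)

definition rot :: "complex \<Rightarrow> complex" where
  "rot z = (if z = 0 then 1 else cnj z / of_real (cmod z))"

lemma rot_norm: "cmod (rot z) = 1"
  by (simp add: rot_def norm_divide)

lemma rot_mult: "rot z * z = of_real (cmod z)"
  by (simp add: rot_def complex_norm_square[symmetric] power2_eq_square field_simps)

lemma logmono: "(0::real) \<le> a \<Longrightarrow> a \<le> b \<Longrightarrow> log 2 (1 + a) \<le> log 2 (1 + b)"
  by simp

lemma B_to_A:
  assumes B: "feasB K h P Rth pc p c gp s d e"
    and u: "\<forall>k\<in>{1..K}. u k \<ge> 0" and mu: "mu \<ge> 0" and Pc: "Pc > 0"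
  shows "feasA K h P Rth pc p c (gamma_c K h pc p) (gamma_p K h p) \<and>
         Phi K u mu Pc pc p c gp \<le> Phi K u mu Pc pc p c (gamma_p K h p)"
proof -
  define Dc where "Dc k = (\<Sum>j\<in>{1..K}. (cmod (herm (h k) (p j)))\<^sup>2) + 1" for k
  define Dp where "Dp k = (\<Sum>j\<in>{1..K}-{k}. (cmod (herm (h k) (p j)))\<^sup>2) + 1" for k
  have Dc: "Dc k > 0" for k unfolding Dc_def by (smt (verit) sum_nonneg zero_le_power2)
  have Dp: "Dp k > 0" for k unfolding Dp_def by (smt (verit) sum_nonneg zero_le_power2)
  have s0: "s \<ge> 0" using B by (simp add: feasB_def)
  have gp_le: "gp k \<le> gamma_p K h p k" "gp k \<ge> 0" if k: "k \<in> {1..K}" for k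
  proof -
    have "sqrt (gp k) * sqrt (Dp k) \<le> Re (herm (h k) (p k))" "gp k \<ge> 0"
      "Re (herm (h k) (p k)) \<ge> 0" "Im (herm (h k) (p k)) = 0"
      using B k by (auto simp: feasB_def Dp_def)
    moreover have "gamma_p K h p k = (cmod (herm (h k) (p k)))^2 / Dp k"
      by (simp add: gamma_p_def Dp_def)
    ultimately show "gp k \<le> gamma_p K h p k" "gp k \<ge> 0"
      using sq_le[OF _ Dp] by (auto simp: cmod_real_Re)
  qed
  have gce: "gamma_c K h pc p k = (cmod (herm (h k) pc))^2 / Dc k" for k
    by (simp add: gamma_c_def Dc_def)
  have s_le: "s \<le> gamma_c K h pc p k" if k: "k \<in> {1..K}" for k
  proof (cases "k = 1")
    case True
    have "sqrt s * sqrt (Dc 1) \<le> Re (herm (h 1) pc)"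
      "Re (herm (h 1) pc) \<ge> 0" "Im (herm (h 1) pc) = 0"
      using B by (auto simp: feasB_def Dc_def)
    then show ?thesis using True sq_le[OF s0 Dc]
      by (auto simp: gce cmod_real_Re)
  next
    case False
    with k have k2: "k \<in> {2..K}" by auto
    have "sqrt s * sqrt (Dc k) \<le> d k" "d k \<le> cmod (e k)" "e k = herm (h k) pc"
      using B k2 by (auto simp: feasB_def Dc_def)
    then have "sqrt s * sqrt (Dc k) \<le> cmod (herm (h k) pc)" by simp
    then show ?thesis using sq_le[OF s0 Dc]
      by (auto simp: gce)
  qed
  have gc0: "gamma_c K h pc p k \<ge> 0" for k by (simp add: gce less_imp_le[OF Dc])
  have feas: "feasA K h P Rth pc p c (gamma_c K h pc p) (gamma_p K h p)"
    unfolding feasA_def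
  proof (intro conjI ballI)
    fix k assume k: "k \<in> {1..K}"
    have "(\<Sum>k'\<in>{1..K}. c k') \<le> log 2 (1 + s)" using B by (simp add: feasB_def)
    also have "\<dots> \<le> log 2 (1 + gamma_c K h pc p k)" using logmono[OF s0 s_le[OF k]] .
    finally show "(\<Sum>k'\<in>{1..K}. c k') \<le> log 2 (1 + gamma_c K h pc p k)" .
    have "c k \<ge> max 0 (Rth k - log 2 (1 + gp k))" using B k by (simp add: feasB_def)
    moreover have "log 2 (1 + gp k) \<le> log 2 (1 + gamma_p K h p k)"
      using logmono gp_le[OF k] by blast
    ultimately show "c k \<ge> max 0 (Rth k - log 2 (1 + gamma_p K h p k))" by simp
  next
    show "totpow K pc p \<le> P" using B by (simp add: feasB_def)
  qed auto
  have tp: "totpow K pc p \<ge> 0" unfolding totpow_def by (simp add: sum_nonneg)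
  have num: "(\<Sum>k\<in>{1..K}. u k * (c k + log 2 (1 + gp k))) \<le>
             (\<Sum>k\<in>{1..K}. u k * (c k + log 2 (1 + gamma_p K h p k)))"
  proof (rule sum_mono)
    fix k assume k: "k \<in> {1..K}"
    have "log 2 (1 + gp k) \<le> log 2 (1 + gamma_p K h p k)"
      using logmono gp_le[OF k] by blast
    then show "u k * (c k + log 2 (1 + gp k)) \<le> u k * (c k + log 2 (1 + gamma_p K h p k))"
      using u k by (intro mult_left_mono) auto
  qed
  have "mu * totpow K pc p + Pc > 0" using tp mu Pc by (smt (verit) mult_nonneg_nonneg)
  then have "Phi K u mu Pc pc p c gp \<le> Phi K u mu Pc pc p c (gamma_p K h p)"
    unfolding Phi_def using num by (simp add: divide_right_mono)
  with feas show ?thesis by blast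
qed

lemma A_to_B:
  assumes A: "feasA K h P Rth pc p c gc gp" and K: "K \<ge> 1"
  shows "\<exists>pc' p' gp' s d e. feasB K h P Rth pc' p' c gp' s d e \<and>
            Phi K u mu Pc pc' p' c gp' = Phi K u mu Pc pc p c gp"
proof -
  define pc' where "pc' = (\<chi> i. rot (herm (h 1) pc) * pc$i)"
  define p' where "p' k = (\<chi> i. rot (herm (h k) (p k)) * p k $ i)" for k
  have hpc: "herm g pc' = rot (herm (h 1) pc) * herm g pc" for g
    unfolding pc'_def by (rule herm_scale)
  have hp: "herm g (p' k) = rot (herm (h k) (p k)) * herm g (p k)" for g k
    unfolding p'_def by (rule herm_scale)
  have chpc: "cmod (herm g pc') = cmod (herm g pc)" for g
    by (simp add: hpc norm_mult rot_norm)
  have chp: "cmod (herm g (p' k)) = cmod (herm g (p k))" for g k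
    by (simp add: hp norm_mult rot_norm)
  have gc: "gamma_c K h pc' p' = gamma_c K h pc p"
    by (rule ext) (simp add: gamma_c_def chpc chp)
  have gpe: "gamma_p K h p' = gamma_p K h p"
    by (rule ext) (simp add: gamma_p_def chp)
  have tp: "totpow K pc' p' = totpow K pc p"
    by (simp add: totpow_def pc'_def p'_def norm_scale rot_norm)
  have h1: "herm (h 1) pc' = of_real (cmod (herm (h 1) pc))"
    by (simp add: hpc rot_mult)
  have hk: "herm (h k) (p' k) = of_real (cmod (herm (h k) (p k)))" for k
    by (simp add: hp rot_mult)
  define Dc where "Dc k = (\<Sum>j\<in>{1..K}. (cmod (herm (h k) (p j)))\<^sup>2) + 1" for k
  define Dp where "Dp k = (\<Sum>j\<in>{1..K}-{k}. (cmod (herm (h k) (p j)))\<^sup>2) + 1" for k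
  have Dc: "Dc k > 0" for k unfolding Dc_def by (smt (verit) sum_nonneg zero_le_power2)
  have Dp: "Dp k > 0" for k unfolding Dp_def by (smt (verit) sum_nonneg zero_le_power2)
  have gce: "gamma_c K h pc p k = (cmod (herm (h k) pc))^2 / Dc k" for k
    by (simp add: gamma_c_def Dc_def)
  have gpee: "gamma_p K h p k = (cmod (herm (h k) (p k)))^2 / Dp k" for k
    by (simp add: gamma_p_def Dp_def)
  define s where "s = Min (gamma_c K h pc p ` {1..K})"
  have fin: "finite (gamma_c K h pc p ` {1..K})" "gamma_c K h pc p ` {1..K} \<noteq> {}" using K by auto
  have s_le: "s \<le> gamma_c K h pc p k" if "k \<in> {1..K}" for k
    unfolding s_def using fin that by simp
  obtain k0 where k0: "k0 \<in> {1..K}" "s = gamma_c K h pc p k0"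
    using Min_in[OF fin] unfolding s_def by auto
  have s0: "s \<ge> 0" using k0 Dc by (simp add: gce less_imp_le)
  have sD: "sqrt s * sqrt (Dc k) \<le> cmod (herm (h k) pc)" if "k \<in> {1..K}" for k
  proof -
    have "sqrt s * sqrt (Dc k) \<le> sqrt (gamma_c K h pc p k) * sqrt (Dc k)"
      using s_le[OF that] s0 Dc[of k] by (intro mult_right_mono) auto
    also have "\<dots> = cmod (herm (h k) pc)" using sq_eq[OF _ Dc] by (simp add: gce)
    finally show ?thesis .
  qed
  have feas: "feasB K h P Rth pc' p' c (gamma_p K h p') s (\<lambda>k. cmod (herm (h k) pc')) (\<lambda>k. herm (h k) pc')"
    unfolding feasB_def
  proof (intro conjI ballI)
    fix k assume k: "k \<in> {1..K}"
    show "gamma_p K h p' k \<ge> 0" using Dp by (simp add: gpe gpee less_imp_le)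
    show "sqrt (gamma_p K h p' k) * sqrt ((\<Sum>j\<in>{1..K}-{k}. (cmod (herm (h k) (p' j)))\<^sup>2) + 1)
                    \<le> Re (herm (h k) (p' k))"
    proof -
      have "(\<Sum>j\<in>{1..K}-{k}. (cmod (herm (h k) (p' j)))\<^sup>2) + 1 = Dp k"
        by (simp add: Dp_def chp)
      then show ?thesis using sq_eq[OF _ Dp] by (simp add: gpe gpee hk)
    qed
    show "Re (herm (h k) (p' k)) \<ge> 0" "Im (herm (h k) (p' k)) = 0" by (simp_all add: hk)
    show "c k \<ge> max 0 (Rth k - log 2 (1 + gamma_p K h p' k))"
    proof -
      have "gp k = gamma_p K h p k" "c k \<ge> max 0 (Rth k - log 2 (1 + gp k))"
        using A k by (auto simp: feasA_def)
      then show ?thesis by (simp add: gpe)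
    qed
  next
    fix k assume k: "k \<in> {2..K}"
    then have k1: "k \<in> {1..K}" by auto
    show "sqrt s * sqrt ((\<Sum>j\<in>{1..K}. (cmod (herm (h k) (p' j)))\<^sup>2) + 1) \<le> cmod (herm (h k) pc')"
      using sD[OF k1] by (simp add: chp chpc Dc_def)
  next
    show "sqrt s * sqrt ((\<Sum>j\<in>{1..K}. (cmod (herm (h 1) (p' j)))\<^sup>2) + 1) \<le> Re (herm (h 1) pc')"
      unfolding h1 using sD[of 1] K by (simp add: chp Dc_def)
    show "totpow K pc' p' \<le> P" using A by (simp add: tp feasA_def)
    have "(\<Sum>k'\<in>{1..K}. c k') \<le> log 2 (1 + gc k0)" using A k0(1) unfolding feasA_def by blast
    moreover have "gc k0 = s" using A k0 unfolding feasA_def by blast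
    ultimately show "(\<Sum>k'\<in>{1..K}. c k') \<le> log 2 (1 + s)" by simp
  qed (insert h1, auto simp: s0)
  have "Phi K u mu Pc pc' p' c (gamma_p K h p') = Phi K u mu Pc pc p c gp"
    unfolding Phi_def tp gpe using A by (auto simp: feasA_def intro!: sum.cong)
  with feas show ?thesis by blast
qed


theorem proposition1:
  fixes K :: nat and h :: "nat \<Rightarrow> complex ^ 'm" and P mu Pc :: real
    and u Rth :: "nat \<Rightarrow> real"
  assumes "K \<ge> 1" and "P > 0" and "\<forall>k\<in>{1..K}. u k \<ge> 0" and "\<exists>k\<in>{1..K}. u k \<noteq> 0"
    and "mu \<ge> 0" and "Pc > 0" and "\<forall>k\<in>{1..K}. Rth k \<ge> 0"
  shows "valA K h P u mu Pc Rth = valB K h P u mu Pc Rth \<and>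
    (\<forall>pc p c gp s d e. optB K h P u mu Pc Rth pc p c gp s d e \<longrightarrow>
        optA K h P u mu Pc Rth pc p c (gamma_c K h pc p) (gamma_p K h p))"
proof (intro conjI allI impI)
  note BA = B_to_A[OF _ assms(3) assms(5) assms(6)]
  note AB = A_to_B[OF _ assms(1), where u=u and mu=mu and Pc=Pc]
  show "valA K h P u mu Pc Rth = valB K h P u mu Pc Rth"
  proof (rule antisym)
    show "valA K h P u mu Pc Rth \<le> valB K h P u mu Pc Rth"
      unfolding valA_def valB_def
    proof (rule Sup_mono, safe)
      fix pc p c gc gp assume "feasA K h P Rth pc p c gc gp"
      then obtain pc' p' gp' s d e where "feasB K h P Rth pc' p' c gp' s d e"
        "Phi K u mu Pc pc' p' c gp' = Phi K u mu Pc pc p c gp" using AB by blast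
      then show "\<exists>b\<in>{ereal (Phi K u mu Pc pc p c gp) | pc p c gp s d e. feasB K h P Rth pc p c gp s d e}.
             ereal (Phi K u mu Pc pc p c gp) \<le> b" by (metis (mono_tags, lifting) mem_Collect_eq order_refl)
    qed
    show "valB K h P u mu Pc Rth \<le> valA K h P u mu Pc Rth"
      unfolding valA_def valB_def
    proof (rule Sup_mono, safe)
      fix pc p c gp s d e assume "feasB K h P Rth pc p c gp s d e"
      then have "feasA K h P Rth pc p c (gamma_c K h pc p) (gamma_p K h p)"
        "Phi K u mu Pc pc p c gp \<le> Phi K u mu Pc pc p c (gamma_p K h p)" using BA by blast+
      then show "\<exists>b\<in>{ereal (Phi K u mu Pc pc p c gp) | pc p c gc gp. feasA K h P Rth pc p c gc gp}.
             ereal (Phi K u mu Pc pc p c gp) \<le> b" by (smt (verit, best) ereal_less_eq(3) mem_Collect_eq)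
    qed
  qed
next
  note BA = B_to_A[OF _ assms(3) assms(5) assms(6)]
  note AB = A_to_B[OF _ assms(1), where u=u and mu=mu and Pc=Pc]
  fix pc p c gp s d e assume opt: "optB K h P u mu Pc Rth pc p c gp s d e"
  then have fB: "feasB K h P Rth pc p c gp s d e" by (simp add: optB_def)
  then have fA: "feasA K h P Rth pc p c (gamma_c K h pc p) (gamma_p K h p)"
    and le: "Phi K u mu Pc pc p c gp \<le> Phi K u mu Pc pc p c (gamma_p K h p)" using BA by blast+
  show "optA K h P u mu Pc Rth pc p c (gamma_c K h pc p) (gamma_p K h p)"
    unfolding optA_def
  proof (intro conjI allI impI fA)
    fix pc' p' c' gc' gp' assume "feasA K h P Rth pc' p' c' gc' gp'"
    then obtain pc'' p'' gp'' s'' d'' e'' where f: "feasB K h P Rth pc'' p'' c' gp'' s'' d'' e''"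
      and eq: "Phi K u mu Pc pc'' p'' c' gp'' = Phi K u mu Pc pc' p' c' gp'" using AB by blast
    have "Phi K u mu Pc pc'' p'' c' gp'' \<le> Phi K u mu Pc pc p c gp"
      using opt f unfolding optB_def by blast
    with eq le show "Phi K u mu Pc pc' p' c' gp' \<le> Phi K u mu Pc pc p c (gamma_p K h p)" by simp
  qed
qed

end
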